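(* Let $p$ be a prime and $3\le k\le p$. Then for every $n$ and every subset $S\subseteq\mathbb{F}_p^n$ with $|S|\ge p^{1+(1-\frac1k)n}$, the set $(S-S)\setminus\{0\}$ contains a non-trivial $k$-term arithmetic progression, i.e. elements $y,y+d,\dots,y+(k-1)d$ with $d\ne0$.
   Context: $S-S=\{x-y:x,y\in S\}$. *)

theory Defs
  imports Complex_Main "HOL-Computational_Algebra.Primes"
begin

text \<open>The vector space F_p^n is modelled as functions nat => int whose coordinates
  i < n lie in {0..<p} and whose coordinates i >= n are 0; arithmetic is coordinatewise mod p.\<close>

definition Fpn :: "nat \<Rightarrow> nat \<Rightarrow> (nat \<Rightarrow> int) set" where
  "Fpn p n = {x. (\<forall>i<n. 0 \<le> x i \<and> x i < int p) \<and> (\<forall>i. n \<le> i \<longrightarrow> x i = 0)}"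

definition vzero :: "nat \<Rightarrow> int" where
  "vzero = (\<lambda>_. 0)"

definition vadd :: "nat \<Rightarrow> nat \<Rightarrow> (nat \<Rightarrow> int) \<Rightarrow> (nat \<Rightarrow> int) \<Rightarrow> (nat \<Rightarrow> int)" where
  "vadd p n x y = (\<lambda>i. if i < n then (x i + y i) mod int p else 0)"

definition vsub :: "nat \<Rightarrow> nat \<Rightarrow> (nat \<Rightarrow> int) \<Rightarrow> (nat \<Rightarrow> int) \<Rightarrow> (nat \<Rightarrow> int)" where
  "vsub p n x y = (\<lambda>i. if i < n then (x i - y i) mod int p else 0)"

definition vscale :: "nat \<Rightarrow> nat \<Rightarrow> int \<Rightarrow> (nat \<Rightarrow> int) \<Rightarrow> (nat \<Rightarrow> int)" where
  "vscale p n c x = (\<lambda>i. if i < n then (c * x i) mod int p else 0)"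

definition diffset :: "nat \<Rightarrow> nat \<Rightarrow> (nat \<Rightarrow> int) set \<Rightarrow> (nat \<Rightarrow> int) set" where
  "diffset p n S = {vsub p n x y | x y. x \<in> S \<and> y \<in> S}"

end

theory Submission
  imports Defs "HOL-Library.FuncSet"
begin

lemma ap_dvd:
  fixes e :: "nat \<Rightarrow> int" and m :: int
  assumes h: "\<And>j. j + 2 < k \<Longrightarrow> m dvd (e j - 2 * e (j+1) + e (j+2))"
  shows "j < k \<Longrightarrow> m dvd (e j - e 0 - int j * (e 1 - e 0))"
proof -
  have "j + 1 < k \<longrightarrow> m dvd (e j - e 0 - int j * (e 1 - e 0)) \<and>
        m dvd (e (j+1) - e 0 - int (j+1) * (e 1 - e 0))" for j
  proof (induction j)
    case 0 then show ?case by simp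
  next
    case (Suc j)
    show ?case
    proof
      assume a: "Suc j + 1 < k"
      then have h1: "m dvd (e j - e 0 - int j * (e 1 - e 0))" and
        h2: "m dvd (e (j+1) - e 0 - int (j+1) * (e 1 - e 0))" using Suc by auto
      have h3: "m dvd (e j - 2 * e (j+1) + e (j+2))" using h a by auto
      have eq: "e (j+2) - e 0 - int (j+2) * (e 1 - e 0) =
        (e j - 2 * e (j+1) + e (j+2)) - (e j - e 0 - int j * (e 1 - e 0))
        + 2 * (e (j+1) - e 0 - int (j+1) * (e 1 - e 0))"
        by (simp add: algebra_simps)
      have "m dvd (e (j+2) - e 0 - int (j+2) * (e 1 - e 0))"
        unfolding eq by (rule dvd_add[OF dvd_diff[OF h3 h1] dvd_mult[OF h2]])
      then show "m dvd (e (Suc j) - e 0 - int (Suc j) * (e 1 - e 0)) \<and>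
        m dvd (e (Suc j + 1) - e 0 - int (Suc j + 1) * (e 1 - e 0))"
        using h2 by (simp add: add.commute)
    qed
  qed
  moreover assume "j < k"
  ultimately show ?thesis
  proof (cases j)
    case 0 then show ?thesis by simp
  next
    case (Suc j') with \<open>j<k\<close> \<open>\<And>j. j + 1 < k \<longrightarrow> _\<close> show ?thesis
      by (metis Suc_eq_plus1)
  qed
qed

lemma pigeon:
  assumes "finite A" "f ` A \<subseteq> B" "finite B" "card A > m * card B"
  shows "\<exists>b\<in>B. card {a\<in>A. f a = b} > m"
proof (rule ccontr)
  assume "\<not> ?thesis"
  then have le: "\<And>b. b \<in> B \<Longrightarrow> card {a\<in>A. f a = b} \<le> m" by auto
  have "A = (\<Union>b\<in>B. {a\<in>A. f a = b})" using assms(2) by auto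
  then have "card A \<le> (\<Sum>b\<in>B. card {a\<in>A. f a = b})"
    by (metis card_UN_le assms(3))
  also have "\<dots> \<le> (\<Sum>b\<in>B. m)" by (rule sum_mono) (rule le)
  also have "\<dots> = m * card B" by simp
  finally show False using assms(4) by simp
qed

lemma two_pow_gt: "2 \<le> k \<Longrightarrow> k + 1 < (2::nat) ^ k"
proof (induction k rule: dec_induct)
  case base then show ?case by simp
next
  case (step k) then show ?case by simp
qed

lemma Fpn_fin:
  shows "finite (Fpn p n) \<and> card (Fpn p n) \<le> p ^ n"
proof -
  define g where "g = (\<lambda>f::nat\<Rightarrow>int. \<lambda>i::nat. if i < n then f i else (0::int))"
  define P where "P = PiE {..<n} (\<lambda>_::nat. {0..<int p})"
  have sub: "Fpn p n \<subseteq> g ` P"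
  proof
    fix x assume x: "x \<in> Fpn p n"
    have "restrict x {..<n} \<in> P" using x by (auto simp: Fpn_def P_def)
    moreover have "x = g (restrict x {..<n})" using x by (auto simp: Fpn_def g_def)
    ultimately show "x \<in> g ` P" by blast
  qed
  have fP: "finite P" unfolding P_def by (intro finite_PiE) auto
  have cP: "card P = p ^ n" unfolding P_def by (simp add: card_PiE)
  have "card (Fpn p n) \<le> card (g ` P)" using sub fP by (intro card_mono) auto
  also have "\<dots> \<le> card P" by (rule card_image_le[OF fP])
  finally show ?thesis using cP sub fP finite_subset by auto
qed

lemma small_eq:
  fixes a b :: int
  assumes "0 \<le> a" "a < p" "0 \<le> b" "b < p" "p dvd (a - b)"
  shows "a = b"
proof -
  have "a mod p = b mod p" using assms(5) by (simp add: mod_eq_dvd_iff)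
  then show ?thesis using assms by simp
qed

lemma vsub_in: "0 < p \<Longrightarrow> vsub p n x y \<in> Fpn p n"
  by (auto simp: vsub_def Fpn_def)
lemma vadd_in: "0 < p \<Longrightarrow> vadd p n x y \<in> Fpn p n"
  by (auto simp: vadd_def Fpn_def)

lemma uniq_vec:
  assumes "x \<in> Fpn p n" "y \<in> Fpn p n" "\<And>i. i < n \<Longrightarrow> int p dvd (x i - y i)"
  shows "x = y"
proof
  fix i show "x i = y i"
  proof (cases "i < n")
    case True then show ?thesis using assms small_eq[of "x i" "int p" "y i"]
      by (auto simp: Fpn_def)
  next
    case False then show ?thesis using assms by (auto simp: Fpn_def)
  qed
qed

theorem corollaryE:
  fixes p k n :: nat and S :: "(nat \<Rightarrow> int) set"
  assumes "prime p" and "3 \<le> k" and "k \<le> p"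
    and "S \<subseteq> Fpn p n"
    and "real (card S) \<ge> real p powr (1 + (1 - 1 / real k) * real n)"
  shows "\<exists>y d. y \<in> Fpn p n \<and> d \<in> Fpn p n \<and> d \<noteq> vzero \<and>
           (\<forall>j<k. vadd p n y (vscale p n (int j) d) \<in> diffset p n S - {vzero})"
proof -
  have p2: "p \<ge> 2" using assms(1) prime_ge_2_nat by blast
  have p0: "(0::int) < int p" using p2 by simp
  have finF: "finite (Fpn p n)" and cardF: "card (Fpn p n) \<le> p ^ n" using Fpn_fin by auto
  have finS: "finite S" using assms(4) finF finite_subset by blast
  have "real (card S) ^ k \<ge> (real p powr (1 + (1 - 1 / real k) * real n)) ^ k"
    using assms(5) by (intro power_mono) auto
  also have "(real p powr (1 + (1 - 1 / real k) * real n)) ^ k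
      = real p powr ((1 + (1 - 1 / real k) * real n) * real k)"
    using p2 by (simp add: powr_realpow[symmetric] powr_powr)
  also have "(1 + (1 - 1 / real k) * real n) * real k = real (k + (k-1)*n)"
    using assms(2) by (simp add: field_simps of_nat_diff)
  also have "real p powr real (k + (k-1)*n) = real (p ^ (k + (k-1)*n))"
  proof -
    have "real p powr real (k + (k-1)*n) = real p ^ (k + (k-1)*n)"
      using p2 by (intro powr_realpow) simp
    then show ?thesis by (simp only: of_nat_power)
  qed
  finally have bigS: "p ^ (k + (k-1)*n) \<le> card S ^ k"
    by (metis of_nat_le_iff of_nat_power)
  have "k + 1 < 2 ^ k" using two_pow_gt assms(2) by simp
  also have "(2::nat) ^ k \<le> p ^ k" using p2 by (simp add: power_mono)
  finally have pk: "k + 1 < p ^ k" .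
  define T where "T = PiE {0..<k} (\<lambda>_. S)"
  define Phi where "Phi = (\<lambda>s::nat\<Rightarrow>nat\<Rightarrow>int. \<lambda>j\<in>{0..<k-2}. \<lambda>i. if i<n then (s j i - 2*s (Suc j) i + s (Suc (Suc j)) i) mod int p else 0)"
  define B where "B = PiE {0..<k-2} (\<lambda>_. Fpn p n)"
  have finT: "finite T" unfolding T_def using finS by (intro finite_PiE) auto
  have finB: "finite B" unfolding B_def using finF by (intro finite_PiE) auto
  have PhiB: "Phi ` T \<subseteq> B" unfolding B_def Phi_def using p0 by (auto simp: Fpn_def)
  have cardT: "card T = card S ^ k" unfolding T_def by (simp add: card_PiE)
  have cardB: "card B \<le> p ^ (n*(k-2))" unfolding B_def
    by (simp add: card_PiE power_mult power_mono cardF)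
  have "(k+1) * p^n * card B \<le> (k+1) * p^n * p ^ (n*(k-2))" using cardB by simp
  also have "\<dots> < p^k * p^n * p ^ (n*(k-2))"
  proof -
    have "(k+1) * (p^n * p^(n*(k-2))) < p^k * (p^n*p^(n*(k-2)))"
      by (rule mult_strict_right_mono[OF pk]) (use p2 in simp)
    then show ?thesis by (simp only: mult.assoc)
  qed
  also have "\<dots> = p ^ (k + (k-1)*n)"
  proof -
    have "k + (k-1)*n = k + n + n*(k-2)" using assms(2)
      by (cases k) (auto simp: algebra_simps)
    then show ?thesis by (simp add: power_add)
  qed
  finally have big: "(k+1) * p^n * card B < card T" using bigS cardT by simp
  obtain b where "b \<in> B" and bF: "card {s\<in>T. Phi s = b} > (k+1)*p^n"
    using pigeon[OF finT PhiB finB big] by blast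
  define F where "F = {s\<in>T. Phi s = b}"
  have finFF: "finite F" unfolding F_def using finT by simp
  have cF: "card F > (k+1)*p^n" using bF F_def by simp
  then have "F \<noteq> {}" by (intro notI) simp
  then obtain s where sF: "s \<in> F" by blast
  define e where "e = (\<lambda>t::nat\<Rightarrow>nat\<Rightarrow>int. \<lambda>j i. s j i - t j i)"
  define dd where "dd = (\<lambda>t::nat\<Rightarrow>nat\<Rightarrow>int. vsub p n (vsub p n (s 1) (t 1)) (vsub p n (s 0) (t 0)))"
  have TF: "\<And>t j. t \<in> F \<Longrightarrow> j < k \<Longrightarrow> t j \<in> S" unfolding F_def T_def by auto
  have TFn: "\<And>t j. t \<in> F \<Longrightarrow> j < k \<Longrightarrow> t j \<in> Fpn p n" using TF assms(4) by auto
  have key: "int p dvd (e t j i - e t 0 i - int j * (e t 1 i - e t 0 i))"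
    if t: "t \<in> F" and j: "j < k" and i: "i < n" for t j i
  proof (rule ap_dvd[where k=k])
    fix j' assume j': "j' + 2 < k"
    have "Phi t = Phi s" using t sF unfolding F_def by simp
    then have "Phi t j' i = Phi s j' i" by simp
    have "(t j' i - 2*t (Suc j') i + t (Suc (Suc j')) i) mod int p =
       (s j' i - 2*s (Suc j') i + s (Suc (Suc j')) i) mod int p"
    proof -
      have "j' < k - 2" using j' by simp
      then show ?thesis using \<open>Phi t j' i = Phi s j' i\<close> i unfolding Phi_def by simp
    qed
    then have "int p dvd ((s j' i - 2*s (Suc j') i + s (Suc (Suc j')) i) -
        (t j' i - 2*t (Suc j') i + t (Suc (Suc j')) i))"
      by (metis mod_eq_dvd_iff)
    then show "int p dvd (e t j' i - 2 * e t (j'+1) i + e t (j'+2) i)"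
      unfolding e_def by (simp add: algebra_simps)
  qed (rule j)
  have ddc: "int p dvd (dd t i - (e t 1 i - e t 0 i))" if "i < n" for t i
  proof -
    have "dd t i mod int p = (e t 1 i - e t 0 i) mod int p"
      using that unfolding dd_def vsub_def e_def by (simp add: mod_diff_eq)
    then show ?thesis by (metis mod_eq_dvd_iff)
  qed
  have vz: "int p dvd (x i - y i)" if "vsub p n x y = vzero" "i < n" for x y i
  proof -
    have "vsub p n x y i = 0" using that by (simp add: vzero_def)
    then show ?thesis using that by (simp add: vsub_def mod_eq_0_iff_dvd)
  qed
  have uniq: "t = t'" if "t \<in> F" "t' \<in> F"
    "\<And>j i. j < k \<Longrightarrow> i < n \<Longrightarrow> int p dvd (e t j i - e t' j i)" for t t'
  proof -
    have "t \<in> T" "t' \<in> T" using that unfolding F_def by auto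
    then show ?thesis unfolding T_def
    proof (rule PiE_ext)
      fix j assume "j \<in> {0..<k}"
      then have j: "j < k" by simp
      show "t j = t' j"
      proof (rule uniq_vec[OF TFn[OF that(1) j] TFn[OF that(2) j]])
        fix i assume "i < n"
        then have "int p dvd (e t' j i - e t j i)"
          using that(3)[OF j] by (metis dvd_minus_iff minus_diff_eq)
        then show "int p dvd (t j i - t' j i)" unfolding e_def by (simp add: algebra_simps)
      qed
    qed
  qed
  define B0 where "B0 = {t\<in>F. dd t = vzero}"
  define Bj where "Bj = (\<lambda>j0. {t\<in>F. vsub p n (s j0) (t j0) = vzero})"
  have cB0: "card B0 \<le> p ^ n"
  proof -
    have "inj_on (\<lambda>t. vsub p n (s 0) (t 0)) B0"
    proof (rule inj_onI)
      fix t t' assume tB: "t \<in> B0" "t' \<in> B0" and eq: "vsub p n (s 0) (t 0) = vsub p n (s 0) (t' 0)"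
      show "t = t'"
      proof (rule uniq)
        show "t \<in> F" "t' \<in> F" using tB B0_def by auto
        fix j i assume j: "j < k" and i: "i < n"
        have a1: "int p dvd (e t j i - e t 0 i - int j * (e t 1 i - e t 0 i))"
          using key tB j i B0_def by auto
        have a2: "int p dvd (e t' j i - e t' 0 i - int j * (e t' 1 i - e t' 0 i))"
          using key tB j i B0_def by auto
        have a3: "int p dvd (e t 1 i - e t 0 i)"
          using ddc[OF i, of t] tB i B0_def by (simp add: vzero_def dvd_diff_commute)
        have a4: "int p dvd (e t' 1 i - e t' 0 i)"
          using ddc[OF i, of t'] tB i B0_def by (simp add: vzero_def dvd_diff_commute)
        have "(s 0 i - t 0 i) mod int p = (s 0 i - t' 0 i) mod int p"
          using fun_cong[OF eq, of i] i by (simp add: vsub_def)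
        then have a5: "int p dvd (e t 0 i - e t' 0 i)" unfolding e_def by (metis mod_eq_dvd_iff)
        have eq2: "e t j i - e t' j i = (e t j i - e t 0 i - int j * (e t 1 i - e t 0 i))
          - (e t' j i - e t' 0 i - int j * (e t' 1 i - e t' 0 i))
          + int j * (e t 1 i - e t 0 i) - int j * (e t' 1 i - e t' 0 i) + (e t 0 i - e t' 0 i)"
          by (simp add: algebra_simps)
        show "int p dvd (e t j i - e t' j i)" unfolding eq2
          by (intro dvd_add dvd_diff dvd_mult a1 a2 a3 a4 a5)
      qed
    qed
    moreover have "(\<lambda>t. vsub p n (s 0) (t 0)) ` B0 \<subseteq> Fpn p n" using vsub_in p0 by auto
    ultimately have "card B0 \<le> card (Fpn p n)" using finF by (metis card_inj_on_le)
    then show ?thesis using cardF by simp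
  qed
  have cBj: "card (Bj j0) \<le> p ^ n" if j0: "j0 < k" for j0
  proof -
    have "inj_on dd (Bj j0)"
    proof (rule inj_onI)
      fix t t' assume tB: "t \<in> Bj j0" "t' \<in> Bj j0" and eq: "dd t = dd t'"
      have tF: "t \<in> F" "t' \<in> F" using tB Bj_def by auto
      show "t = t'"
      proof (rule uniq[OF tF])
        fix j i assume j: "j < k" and i: "i < n"
        define D where "D = e t 1 i - e t 0 i"
        define D' where "D' = e t' 1 i - e t' 0 i"
        have a1: "int p dvd (e t j i - e t 0 i - int j * D)" unfolding D_def using key tF j i by auto
        have a2: "int p dvd (e t' j i - e t' 0 i - int j * D')" unfolding D'_def using key tF j i by auto
        have b1: "int p dvd (e t j0 i - e t 0 i - int j0 * D)" unfolding D_def using key tF j0 i by auto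
        have b2: "int p dvd (e t' j0 i - e t' 0 i - int j0 * D')" unfolding D'_def using key tF j0 i by auto
        have c1: "int p dvd e t j0 i" using vz[of "s j0" "t j0" i] tB i Bj_def e_def by auto
        have c2: "int p dvd e t' j0 i" using vz[of "s j0" "t' j0" i] tB i Bj_def e_def by auto
        have d1: "int p dvd (dd t i - D)" using ddc[OF i] D_def by simp
        have d2: "int p dvd (dd t' i - D')" using ddc[OF i] D'_def by simp
        have dD: "int p dvd (D - D')"
        proof -
          have "D - D' = (dd t' i - D') - (dd t i - D)" using eq by simp
          then show ?thesis using dvd_diff[OF d2 d1] by simp
        qed
        have eq2: "e t j i - e t' j i = (e t j i - e t 0 i - int j * D)
           - (e t j0 i - e t 0 i - int j0 * D) + e t j0 i
           - ((e t' j i - e t' 0 i - int j * D') - (e t' j0 i - e t' 0 i - int j0 * D') + e t' j0 i)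
           + (int j - int j0) * (D - D')"
          by (simp add: algebra_simps)
        show "int p dvd (e t j i - e t' j i)" unfolding eq2
          by (intro dvd_add dvd_diff dvd_mult a1 a2 b1 b2 c1 c2 dD)
      qed
    qed
    moreover have "dd ` (Bj j0) \<subseteq> Fpn p n" unfolding dd_def using vsub_in p0 by auto
    ultimately have "card (Bj j0) \<le> card (Fpn p n)" using finF by (metis card_inj_on_le)
    then show ?thesis using cardF by simp
  qed
  define Bad where "Bad = B0 \<union> (\<Union>j0\<in>{0..<k}. Bj j0)"
  have "card Bad \<le> card B0 + card (\<Union>j0\<in>{0..<k}. Bj j0)" unfolding Bad_def by (rule card_Un_le)
  also have "card (\<Union>j0\<in>{0..<k}. Bj j0) \<le> (\<Sum>j0\<in>{0..<k}. card (Bj j0))" by (rule card_UN_le) simp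
  also have "\<dots> \<le> (\<Sum>j0\<in>{0..<k}. p^n)" by (rule sum_mono) (use cBj in auto)
  finally have "card Bad \<le> (k+1) * p^n" using cB0 by simp
  then have "card Bad < card F" using cF by simp
  moreover have "Bad \<subseteq> F" unfolding Bad_def B0_def Bj_def by auto
  ultimately have "F \<noteq> Bad" by auto
  with \<open>Bad \<subseteq> F\<close> obtain t where tF: "t \<in> F" and tnB: "t \<notin> Bad" by blast
  have dnz: "dd t \<noteq> vzero" using tF tnB unfolding Bad_def B0_def by auto
  have jnz: "vsub p n (s j) (t j) \<noteq> vzero" if "j < k" for j
    using tF tnB that unfolding Bad_def Bj_def by auto
  show ?thesis
  proof (intro exI conjI allI impI)
    show "vsub p n (s 0) (t 0) \<in> Fpn p n" "dd t \<in> Fpn p n" "dd t \<noteq> vzero"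
      using vsub_in p0 dnz unfolding dd_def by auto
    fix j assume j: "j < k"
    have eqv: "vadd p n (vsub p n (s 0) (t 0)) (vscale p n (int j) (dd t)) = vsub p n (s j) (t j)"
    proof
      fix i show "vadd p n (vsub p n (s 0) (t 0)) (vscale p n (int j) (dd t)) i = vsub p n (s j) (t j) i"
      proof (cases "i < n")
        case False then show ?thesis by (simp add: vadd_def vsub_def)
      next
        case True
        have "vadd p n (vsub p n (s 0) (t 0)) (vscale p n (int j) (dd t)) i
           = (e t 0 i + int j * (e t 1 i - e t 0 i)) mod int p"
          using True unfolding vadd_def vscale_def dd_def vsub_def e_def
          by (simp add: mod_simps)
        also have "\<dots> = e t j i mod int p"
          using key[OF tF j True] unfolding mod_eq_dvd_iff by (subst dvd_diff_commute) (simp add: algebra_simps)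
        finally show ?thesis using True by (simp add: vsub_def e_def)
      qed
    qed
    have "vsub p n (s j) (t j) \<in> diffset p n S"
      unfolding diffset_def using TF[OF sF j] TF[OF tF j] by blast
    then show "vadd p n (vsub p n (s 0) (t 0)) (vscale p n (int j) (dd t)) \<in> diffset p n S - {vzero}"
      using eqv jnz[OF j] by simp
  qed
qed

end
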